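(* Let $\mu$ be a Borel probability measure on $\mathbb{R}^d$, $p$ a probability density with respect to $\mu$, and $Q$ a probability density on $\mathbb{R}^d$ with respect to Lebesgue measure. Let $x\sim p\,d\mu$ and $w\sim Q$ be independent and $\tilde x=x+w$, and let $p(\cdot\mid\tilde x)$ denote the conditional (deconvolution) density of $x$ given $\tilde x$ with respect to $\mu$, given by $p(x\mid\tilde x)=p(x)Q(\tilde x-x)/\int Q(\tilde x-x')p(x')\,d\mu(x')$. Fix $\tilde x,\tilde x'\in\mathbb{R}^d$ and suppose $\nabla^2Q$ and $\nabla\log Q$ exist and are continuous on $\mathcal{X}=\{(1-t)\tilde x+t\tilde x'-x: x\in\operatorname{supp}p,\ t\in[0,1]\}$. Then \[ \mathrm{TV}\big(p(\cdot\mid\tilde x),p(\cdot\mid\tilde x')\big)\le\|\tilde x-\tilde x'\|\cdot\sup_{z\in\mathcal{X}}\|\nabla\log Q(z)\|. \]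
   Context: $\operatorname{supp}p$ is the support of the measure $p\,d\mu$ (closure of the set of points all of whose open neighborhoods have positive measure). $\mathrm{TV}$ is total variation distance. *)

theory Defs
  imports "HOL-Analysis.Analysis" "HOL-Probability.Probability"
begin

definition dens_support :: "'a::topological_space measure \<Rightarrow> ('a \<Rightarrow> real) \<Rightarrow> 'a set" where
  "dens_support M p =
     closure {x. \<forall>U. open U \<and> x \<in> U \<longrightarrow> emeasure (density M (\<lambda>y. ennreal (p y))) U > 0}"

definition cond_dens :: "'a::euclidean_space measure \<Rightarrow> ('a \<Rightarrow> real) \<Rightarrow> ('a \<Rightarrow> real) \<Rightarrow> 'a \<Rightarrow> 'a \<Rightarrow> real" where
  "cond_dens M p Q xt x = p x * Q (xt - x) / (\<integral>x'. Q (xt - x') * p x' \<partial>M)"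

text \<open>Total variation distance between the measures f d\<mu> and g d\<mu>
  (= sup over events of the difference of probabilities = half the L1 distance).\<close>
definition tv_dist :: "'a measure \<Rightarrow> ('a \<Rightarrow> real) \<Rightarrow> ('a \<Rightarrow> real) \<Rightarrow> ennreal" where
  "tv_dist M f g = (\<integral>\<^sup>+ x. ennreal (\<bar>f x - g x\<bar> / 2) \<partial>M)"

definition seg_set :: "'a::euclidean_space set \<Rightarrow> 'a \<Rightarrow> 'a \<Rightarrow> 'a set" where
  "seg_set S xt xt' = {(1 - t) *\<^sub>R xt + t *\<^sub>R xt' - x | x t. x \<in> S \<and> t \<in> {0..1}}"

end

theory Submission
  imports Defs
begin

lemma exp_ineq:
  fixes c :: real assumes "c \<ge> 0"
  shows "exp (2*c) * (1 - c) \<le> 1 + c"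
proof -
  let ?f = "\<lambda>c::real. (1+c)*exp(-c) - (1-c)*exp c"
  have "?f 0 \<le> ?f c"
  proof (rule DERIV_nonneg_imp_nondecreasing[OF assms])
    fix x :: real assume "0 \<le> x" "x \<le> c"
    show "\<exists>y. DERIV ?f x :> y \<and> y \<ge> 0"
    proof (intro exI conjI)
      show "DERIV ?f x :> (exp(-x) - (1+x)*exp(-x)) - (-exp x + (1-x)*exp x)"
        by (auto intro!: derivative_eq_intros)
      have "exp(-x) \<le> exp x" using \<open>0 \<le> x\<close> by simp
      then show "(exp(-x) - (1+x)*exp(-x)) - (-exp x + (1-x)*exp x) \<ge> 0"
        using \<open>0 \<le> x\<close> by (simp add: algebra_simps mult_left_mono)
    qed
  qed
  then have "(1-c)*exp c \<le> (1+c)*exp(-c)" by simp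
  then have "(1-c)*exp c * exp c \<le> (1+c)*exp(-c) * exp c" by (simp add: mult_right_mono)
  also have "(1+c)*exp(-c) * exp c = 1 + c" by (simp add: exp_minus)
  also have "(1-c)*exp c * exp c = exp (2*c) * (1 - c)" by (simp add: exp_add[symmetric] mult_ac)
  finally show ?thesis .
qed

lemma key_arith:
  fixes c \<rho> :: real assumes "c \<ge> 0" "\<rho> > 0"
    and "T \<le> max 0 (1 - \<rho> * exp (-c))" "T \<le> max 0 (\<rho> * exp c - 1)"
  shows "T \<le> c"
proof (cases "\<rho> * exp (-c) \<ge> 1 - c")
  case True then show ?thesis using assms by linarith
next
  case False
  then have "\<rho> < (1 - c) * exp c" by (simp add: exp_minus field_simps)
  then have "\<rho> * exp c < (1-c) * exp c * exp c" by simp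
  also have "\<dots> = exp (2*c) * (1 - c)" by (simp add: exp_add[symmetric] mult_ac)
  also have "\<dots> \<le> 1 + c" by (rule exp_ineq[OF assms(1)])
  finally show ?thesis using assms by linarith
qed

lemma absh1: "\<bar>a - b\<bar> / 2 = max 0 (a - b) - (a - b) / (2::real)"
  by (cases "a \<le> b") (simp_all add: max_def abs_if field_simps)
lemma absh2: "\<bar>a - b\<bar> / 2 = max 0 (b - a) + (a - b) / (2::real)"
  by (cases "a \<le> b") (simp_all add: max_def abs_if field_simps)

lemma support_null:
  fixes M :: "'a::euclidean_space measure"
  assumes "sets M = sets borel" "p \<in> borel_measurable M" "\<And>x. p x \<ge> 0"
  shows "AE x in M. x \<notin> dens_support M p \<longrightarrow> p x = 0"
proof -
  let ?N = "density M (\<lambda>y. ennreal (p y))"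
  let ?F = "{U. open U \<and> emeasure ?N U = 0}"
  obtain F' where F': "F' \<subseteq> ?F" "countable F'" "\<Union>F' = \<Union>?F"
    using Lindelof[of ?F] by auto
  have sN: "sets ?N = sets borel" using assms(1) by simp
  have F'null: "U \<in> null_sets ?N" if "U \<in> F'" for U
  proof -
    have "open U" "emeasure ?N U = 0" using F'(1) that by auto
    then show ?thesis using sN by (auto simp: null_sets_def)
  qed
  have "\<Union>F' \<in> null_sets ?N"
    using null_sets_UN'[of F' "\<lambda>U. U" ?N] F'(2) F'null by simp
  have sub: "- dens_support M p \<subseteq> \<Union>?F"
  proof
    fix x assume x: "x \<in> - dens_support M p"
    have "x \<notin> {x. \<forall>U. open U \<and> x \<in> U \<longrightarrow> emeasure ?N U > 0}"
    proof
      assume "x \<in> {x. \<forall>U. open U \<and> x \<in> U \<longrightarrow> emeasure ?N U > 0}"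
      then have "x \<in> dens_support M p" unfolding dens_support_def by (rule closure_subset[THEN subsetD])
      then show False using x by simp
    qed
    then obtain U where "open U" "x \<in> U" "\<not> emeasure ?N U > 0" by blast
    then show "x \<in> \<Union>?F" by auto
  qed
  have cl: "closed (dens_support M p)" unfolding dens_support_def by (rule closed_closure)
  have s1: "- dens_support M p \<subseteq> \<Union>F'" using sub F'(3) by simp
  have s2: "- dens_support M p \<in> sets ?N" unfolding sN using cl by (intro borel_open) auto
  have "- dens_support M p \<in> null_sets ?N"
    by (rule null_sets_subset[OF \<open>\<Union>F' \<in> null_sets ?N\<close> s2 s1])
  then have e0: "emeasure ?N (- dens_support M p) = 0" by (simp only: null_sets_def mem_Collect_eq)
  have s3: "- dens_support M p \<in> sets M" using s2 by simp
  have "emeasure ?N (- dens_support M p) = (\<integral>\<^sup>+x. ennreal (p x) * indicator (- dens_support M p) x \<partial>M)"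
    by (rule emeasure_density) (use assms s3 in auto)
  with e0 have "(\<integral>\<^sup>+x. ennreal (p x) * indicator (- dens_support M p) x \<partial>M) = 0" by simp
  then have "AE x in M. ennreal (p x) * indicator (- dens_support M p) x = 0"
    using nn_integral_0_iff_AE[of "\<lambda>x. ennreal (p x) * indicator (- dens_support M p) x" M] assms s3 by simp
  then show ?thesis by eventually_elim (auto simp: indicator_def assms(3))
qed

theorem proposition16:
  fixes M :: "'a::euclidean_space measure"
    and p Q :: "'a \<Rightarrow> real"
    and xt xt' :: 'a
    and DQ :: "'a \<Rightarrow> 'a" and HQ :: "'a \<Rightarrow> 'a \<Rightarrow>\<^sub>L 'a" and G :: "'a \<Rightarrow> 'a"
  assumes M_prob: "prob_space M" and M_borel: "sets M = sets borel"
    and p_meas: "p \<in> borel_measurable M" and p_nonneg: "\<And>x. p x \<ge> 0"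
    and p_dens: "(\<integral>\<^sup>+ x. ennreal (p x) \<partial>M) = 1"
    and Q_meas: "Q \<in> borel_measurable lborel" and Q_nonneg: "\<And>z. Q z \<ge> 0"
    and Q_dens: "(\<integral>\<^sup>+ z. ennreal (Q z) \<partial>lborel) = 1"
    and norm_xt: "integrable M (\<lambda>x. Q (xt - x) * p x)"
    and norm_xt': "integrable M (\<lambda>x. Q (xt' - x) * p x)"
    and grad_Q: "\<exists>S. open S \<and> seg_set (dens_support M p) xt xt' \<subseteq> S \<and>
                    (\<forall>y\<in>S. (Q has_derivative (\<lambda>h. DQ y \<bullet> h)) (at y))"
    and hess_Q: "\<forall>z\<in>seg_set (dens_support M p) xt xt'. (DQ has_derivative blinfun_apply (HQ z)) (at z)"
    and hess_cont: "continuous_on (seg_set (dens_support M p) xt xt') HQ"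
    and grad_logQ: "\<forall>z\<in>seg_set (dens_support M p) xt xt'.
                      Q z > 0 \<and> ((\<lambda>y. ln (Q y)) has_derivative (\<lambda>h. G z \<bullet> h)) (at z)"
    and grad_logQ_cont: "continuous_on (seg_set (dens_support M p) xt xt') G"
  shows "tv_dist M (cond_dens M p Q xt) (cond_dens M p Q xt')
           \<le> ennreal (norm (xt - xt')) * (SUP z\<in>seg_set (dens_support M p) xt xt'. ennreal (norm (G z)))"
proof -
  let ?S = "dens_support M p"
  let ?SS = "seg_set ?S xt xt'"
  define L where "L = (SUP z\<in>?SS. ennreal (norm (G z)))"
  define f0 where "f0 = cond_dens M p Q xt"
  define f1 where "f1 = cond_dens M p Q xt'"
  interpret prob_space M by (rule M_prob)
  show ?thesis
  proof (cases "L = top")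
    case True
    show ?thesis
    proof (cases "xt = xt'")
      case True then show ?thesis by (simp add: tv_dist_def)
    next
      case False then have "ennreal (norm (xt - xt')) \<noteq> 0" by simp
      then have "ennreal (norm (xt - xt')) * L = top" using \<open>L = top\<close> by (simp add: ennreal_mult_top)
      then show ?thesis unfolding L_def by simp
    qed
  next
    case False
    define L' where "L' = enn2real L"
    have LL': "L = ennreal L'" unfolding L'_def using False by (simp add: ennreal_enn2real less_top)
    have L'nn: "L' \<ge> 0" unfolding L'_def by simp
    have Lb: "norm (G z) \<le> L'" if "z \<in> ?SS" for z
    proof -
      have "ennreal (norm (G z)) \<le> L" unfolding L_def using that by (rule SUP_upper)
      then show ?thesis using LL' L'nn by simp
    qed
    define c where "c = norm (xt - xt') * L'"
    have cnn: "c \<ge> 0" unfolding c_def using L'nn by simp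
    have RHS: "ennreal (norm (xt - xt')) * L = ennreal c"
      unfolding c_def LL' using L'nn by (simp add: ennreal_mult)
    have inSS: "(1 - u) *\<^sub>R (xt - x) + u *\<^sub>R (xt' - x) \<in> ?SS" if "x \<in> ?S" "0 \<le> u" "u \<le> 1" for x u
    proof -
      have "(1 - u) *\<^sub>R (xt - x) + u *\<^sub>R (xt' - x) = (1 - u) *\<^sub>R xt + u *\<^sub>R xt' - x"
        by (simp add: algebra_simps)
      then show ?thesis unfolding seg_set_def using that by auto
    qed
    have Qpos0: "Q (xt - x) > 0" if "x \<in> ?S" for x
      using grad_logQ inSS[OF that, of 0] by simp
    have Qpos1: "Q (xt' - x) > 0" if "x \<in> ?S" for x
      using grad_logQ inSS[OF that, of 1] by simp
    have lnb: "\<bar>ln (Q (xt' - x)) - ln (Q (xt - x))\<bar> \<le> c" if x: "x \<in> ?S" for x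
    proof -
      let ?C = "closed_segment (xt - x) (xt' - x)"
      have CS: "z \<in> ?SS" if "z \<in> ?C" for z
        using that inSS[OF x] unfolding closed_segment_def by auto
      have "norm ((\<lambda>y. ln (Q y)) (xt' - x) - (\<lambda>y. ln (Q y)) (xt - x)) \<le> L' * norm ((xt' - x) - (xt - x))"
      proof (rule differentiable_bound[where f' = "\<lambda>z h. G z \<bullet> h"])
        show "convex ?C" by simp
        show "((\<lambda>y. ln (Q y)) has_derivative (\<lambda>h. G z \<bullet> h)) (at z within ?C)" if "z \<in> ?C" for z
          using grad_logQ CS[OF that] by (auto intro: has_derivative_at_withinI)
        show "onorm (\<lambda>h. G z \<bullet> h) \<le> L'" if "z \<in> ?C" for z
        proof -
          have "onorm (\<lambda>h::'a. G z \<bullet> h) \<le> norm (G z) * onorm (\<lambda>h::'a. h)"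
            by (rule onorm_inner_right) (rule bounded_linear_ident)
          then show ?thesis using Lb[OF CS[OF that]] by (simp add: onorm_id)
        qed
      qed auto
      then show ?thesis unfolding c_def by (simp add: norm_minus_commute mult.commute)
    qed
    have rat1: "Q (xt' - x) \<le> exp c * Q (xt - x)" if x: "x \<in> ?S" for x
    proof -
      have "ln (Q (xt' - x)) \<le> c + ln (Q (xt - x))" using lnb[OF x] by linarith
      then have "exp (ln (Q (xt' - x))) \<le> exp (c + ln (Q (xt - x)))" by simp
      then show ?thesis using Qpos0[OF x] Qpos1[OF x] by (simp add: exp_add)
    qed
    have rat0: "Q (xt - x) \<le> exp c * Q (xt' - x)" if x: "x \<in> ?S" for x
    proof -
      have "ln (Q (xt - x)) \<le> c + ln (Q (xt' - x))" using lnb[OF x] by linarith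
      then have "exp (ln (Q (xt - x))) \<le> exp (c + ln (Q (xt' - x)))" by simp
      then show ?thesis using Qpos0[OF x] Qpos1[OF x] by (simp add: exp_add)
    qed
    have AEs: "AE x in M. x \<notin> ?S \<longrightarrow> p x = 0"
      by (rule support_null[OF M_borel p_meas p_nonneg])
    define Z0 where "Z0 = (\<integral>x'. Q (xt - x') * p x' \<partial>M)"
    define Z1 where "Z1 = (\<integral>x'. Q (xt' - x') * p x' \<partial>M)"
    have Zpos: "(\<integral>x'. Q (a - x') * p x' \<partial>M) > 0"
      if int: "integrable M (\<lambda>x. Q (a - x) * p x)" and pos: "\<And>x. x \<in> ?S \<Longrightarrow> Q (a - x) > 0" for a
    proof (rule ccontr)
      assume "\<not> ?thesis"
      moreover have "(\<integral>x'. Q (a - x') * p x' \<partial>M) \<ge> 0"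
        using Q_nonneg p_nonneg by (intro Bochner_Integration.integral_nonneg) auto
      ultimately have "(\<integral>x'. Q (a - x') * p x' \<partial>M) = 0" by simp
      then have "AE x in M. Q (a - x) * p x = 0"
        using integral_nonneg_eq_0_iff_AE[OF int] Q_nonneg p_nonneg by simp
      then have "AE x in M. ennreal (p x) = 0"
        using AEs by eventually_elim (use pos in fastforce)
      then have "(\<integral>\<^sup>+ x. ennreal (p x) \<partial>M) = (\<integral>\<^sup>+ x. 0 \<partial>M)" by (rule nn_integral_cong_AE)
      then show False using p_dens by simp
    qed
    have Z0pos: "Z0 > 0" unfolding Z0_def by (rule Zpos[OF norm_xt Qpos0])
    have Z1pos: "Z1 > 0" unfolding Z1_def by (rule Zpos[OF norm_xt' Qpos1])
    have f0_eq: "f0 = (\<lambda>x. Q (xt - x) * p x / Z0)"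
      unfolding f0_def cond_dens_def Z0_def by (auto simp: mult.commute)
    have f1_eq: "f1 = (\<lambda>x. Q (xt' - x) * p x / Z1)"
      unfolding f1_def cond_dens_def Z1_def by (auto simp: mult.commute)
    have i0: "integrable M f0" unfolding f0_eq using norm_xt by (rule integrable_divide_zero)
    have i1: "integrable M f1" unfolding f1_eq using norm_xt' by (rule integrable_divide_zero)
    have I0: "integral\<^sup>L M f0 = 1" unfolding f0_eq using Z0pos by (simp add: Z0_def)
    have I1: "integral\<^sup>L M f1 = 1" unfolding f1_eq using Z1pos by (simp add: Z1_def)
    have f0nn: "f0 x \<ge> 0" for x unfolding f0_eq using Z0pos Q_nonneg p_nonneg by simp
    have f1nn: "f1 x \<ge> 0" for x unfolding f1_eq using Z1pos Q_nonneg p_nonneg by simp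
    define \<rho> where "\<rho> = Z0 / Z1"
    have \<rho>pos: "\<rho> > 0" unfolding \<rho>_def using Z0pos Z1pos by simp
    have lowb: "AE x in M. \<rho> * exp (-c) * f0 x \<le> f1 x"
      using AEs
    proof eventually_elim
      case (elim x)
      show ?case
      proof (cases "x \<in> ?S")
        case True
        have "exp (-c) * Q (xt - x) \<le> Q (xt' - x)"
          using rat0[OF True] by (simp add: exp_minus field_simps)
        then have "exp (-c) * Q (xt - x) * p x / Z1 \<le> Q (xt' - x) * p x / Z1"
          using p_nonneg Z1pos by (intro divide_right_mono mult_right_mono) auto
        moreover have "\<rho> * exp (-c) * f0 x = exp (-c) * Q (xt - x) * p x / Z1"
          unfolding f0_eq \<rho>_def using Z0pos Z1pos by (simp add: field_simps)
        ultimately show ?thesis unfolding f1_eq by simp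
      next
        case False then show ?thesis using elim by (simp add: f0_eq f1_eq)
      qed
    qed
    have upb: "AE x in M. f1 x \<le> \<rho> * exp c * f0 x"
      using AEs
    proof eventually_elim
      case (elim x)
      show ?case
      proof (cases "x \<in> ?S")
        case True
        have "Q (xt' - x) * p x / Z1 \<le> exp c * Q (xt - x) * p x / Z1"
          using rat1[OF True] p_nonneg Z1pos by (intro divide_right_mono mult_right_mono) auto
        moreover have "\<rho> * exp c * f0 x = exp c * Q (xt - x) * p x / Z1"
          unfolding f0_eq \<rho>_def using Z0pos Z1pos by (simp add: field_simps)
        ultimately show ?thesis unfolding f1_eq by simp
      next
        case False then show ?thesis using elim by (simp add: f0_eq f1_eq)
      qed
    qed
    define T where "T = (\<integral>x. \<bar>f0 x - f1 x\<bar> / 2 \<partial>M)"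
    have iT: "integrable M (\<lambda>x. \<bar>f0 x - f1 x\<bar> / 2)"
      using i0 i1 by (intro integrable_divide_zero integrable_abs Bochner_Integration.integrable_diff)
    have TV: "tv_dist M f0 f1 = ennreal T"
      unfolding tv_dist_def T_def by (rule nn_integral_eq_integral[OF iT]) auto
    have idiff: "integral\<^sup>L M (\<lambda>x. (f0 x - f1 x) / 2) = 0"
      using i0 i1 I0 I1 by (simp add: Bochner_Integration.integral_diff)
    have T1: "T = (\<integral>x. max 0 (f0 x - f1 x) \<partial>M)"
    proof -
      have "T = (\<integral>x. max 0 (f0 x - f1 x) - (f0 x - f1 x) / 2 \<partial>M)"
        unfolding T_def by (rule Bochner_Integration.integral_cong[OF refl]) (rule absh1)
      also have "\<dots> = (\<integral>x. max 0 (f0 x - f1 x) \<partial>M) - (\<integral>x. (f0 x - f1 x) / 2 \<partial>M)"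
        using i0 i1 by (intro Bochner_Integration.integral_diff Bochner_Integration.integrable_max integrable_divide_zero Bochner_Integration.integrable_diff) auto
      finally show ?thesis using idiff by simp
    qed
    have T2: "T = (\<integral>x. max 0 (f1 x - f0 x) \<partial>M)"
    proof -
      have "T = (\<integral>x. max 0 (f1 x - f0 x) + (f0 x - f1 x) / 2 \<partial>M)"
        unfolding T_def by (rule Bochner_Integration.integral_cong[OF refl]) (rule absh2)
      also have "\<dots> = (\<integral>x. max 0 (f1 x - f0 x) \<partial>M) + (\<integral>x. (f0 x - f1 x) / 2 \<partial>M)"
        using i0 i1 by (intro Bochner_Integration.integral_add Bochner_Integration.integrable_max integrable_divide_zero Bochner_Integration.integrable_diff) auto
      finally show ?thesis using idiff by simp
    qed
    have Tle1: "T \<le> max 0 (1 - \<rho> * exp (-c))"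
    proof -
      have "T \<le> (\<integral>x. max 0 (1 - \<rho> * exp (-c)) * f0 x \<partial>M)"
        unfolding T1
      proof (rule integral_mono_AE)
        show "integrable M (\<lambda>x. max 0 (f0 x - f1 x))"
          using i0 i1 by (intro Bochner_Integration.integrable_max Bochner_Integration.integrable_diff) auto
        show "integrable M (\<lambda>x. max 0 (1 - \<rho> * exp (-c)) * f0 x)"
          using i0 by (rule integrable_mult_right)
        show "AE x in M. max 0 (f0 x - f1 x) \<le> max 0 (1 - \<rho> * exp (-c)) * f0 x"
          using lowb
        proof eventually_elim
          case (elim x)
          have "f0 x - f1 x \<le> (1 - \<rho> * exp (-c)) * f0 x" using elim by (simp add: algebra_simps)
          also have "\<dots> \<le> max 0 (1 - \<rho> * exp (-c)) * f0 x" using f0nn[of x] by (intro mult_right_mono) auto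
          finally show ?case using f0nn[of x] by simp
        qed
      qed
      also have "\<dots> = max 0 (1 - \<rho> * exp (-c))" using I0 by simp
      finally show ?thesis .
    qed
    have Tle2: "T \<le> max 0 (\<rho> * exp c - 1)"
    proof -
      have "T \<le> (\<integral>x. max 0 (\<rho> * exp c - 1) * f0 x \<partial>M)"
        unfolding T2
      proof (rule integral_mono_AE)
        show "integrable M (\<lambda>x. max 0 (f1 x - f0 x))"
          using i0 i1 by (intro Bochner_Integration.integrable_max Bochner_Integration.integrable_diff) auto
        show "integrable M (\<lambda>x. max 0 (\<rho> * exp c - 1) * f0 x)"
          using i0 by (rule integrable_mult_right)
        show "AE x in M. max 0 (f1 x - f0 x) \<le> max 0 (\<rho> * exp c - 1) * f0 x"
          using upb
        proof eventually_elim
          case (elim x)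
          have "f1 x - f0 x \<le> (\<rho> * exp c - 1) * f0 x" using elim by (simp add: algebra_simps)
          also have "\<dots> \<le> max 0 (\<rho> * exp c - 1) * f0 x" using f0nn[of x] by (intro mult_right_mono) auto
          finally show ?case using f0nn[of x] by simp
        qed
      qed
      also have "\<dots> = max 0 (\<rho> * exp c - 1)" using I0 by simp
      finally show ?thesis .
    qed
    have "T \<le> c" by (rule key_arith[OF cnn \<rho>pos Tle1 Tle2])
    then have "tv_dist M f0 f1 \<le> ennreal c" unfolding TV by (rule ennreal_leI)
    then show ?thesis unfolding f0_def f1_def RHS[symmetric] L_def .
  qed
qed

end
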